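(* Let $0\le\alpha<d$, $1<p<d/\alpha$, $\frac1q=\frac1p-\frac\alpha d$, and let $W$ be any matrix weight for which $\|W^{-1/q}\|^{p'}$ is locally integrable. Let $\mathscr D$ be a dyadic grid and $M'_{W,\alpha}\vec f(x)=\sup_{Q\in\mathscr D,\,Q\ni x}\frac{1}{|Q|^{1-\alpha/d}}\int_Q|\mathcal V_Q^{-1}W^{-1/q}(y)\vec f(y)|dy$. Then $M'_{W,\alpha}$ is of weak type $(p,q)$: for all $\lambda>0$ and $\vec f\in L^p(\mathbb{R}^d;\mathbb{C}^n)$, $$|\{x:M'_{W,\alpha}\vec f(x)>\lambda\}|\lesssim\lambda^{-q}\|\vec f\|_{L^p}^q,$$ with constant depending only on $n,d,p,\alpha$.
   Context: A matrix weight is $W:\mathbb{R}^d\to\mathcal{M}_{n\times n}(\mathbb{C})$ with locally integrable, a.e. positive definite values. For each cube $Q$, $\mathcal V_Q$ is a positive definite $n\times n$ matrix with $\left(\frac1{|Q|}\int_Q|W^{-1/q}\vec e|^{p'}\right)^{1/p'}\le|\mathcal V_Q\vec e|\le\sqrt n\left(\frac1{|Q|}\int_Q|W^{-1/q}\vec e|^{p'}\right)^{1/p'}$ for all $\vec e\in\mathbb{C}^n$. A dyadic grid $\mathscr D$ is a collection of cubes with side lengths powers of $2$, each generation partitioning $\mathbb{R}^d$, and any two cubes either disjoint or nested. *)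

theory Defs
  imports "HOL-Analysis.Analysis"
begin

definition cadj :: "complex^'n^'n \<Rightarrow> complex^'n^'n" where
  "cadj A = (\<chi> i j. cnj (A $ j $ i))"

definition hermitian :: "complex^'n^'n \<Rightarrow> bool" where
  "hermitian A \<longleftrightarrow> cadj A = A"

definition posdef :: "complex^'n^'n \<Rightarrow> bool" where
  "posdef A \<longleftrightarrow> hermitian A \<and>
     (\<forall>v::complex^'n. v \<noteq> 0 \<longrightarrow> 0 < Re (\<Sum>i\<in>UNIV. \<Sum>j\<in>UNIV. cnj (v $ i) * A $ i $ j * v $ j))"

definition unitary :: "complex^'n^'n \<Rightarrow> bool" where
  "unitary U \<longleftrightarrow> U ** cadj U = mat 1 \<and> cadj U ** U = mat 1"

definition cdiag :: "('n \<Rightarrow> real) \<Rightarrow> complex^'n^'n" where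
  "cdiag lam = (\<chi> i j. if i = j then complex_of_real (lam i) else 0)"

text \<open>Real power A^s of a positive definite matrix via spectral decomposition
  A = U diag(lam) U^*, A^s = U diag(lam^s) U^* (well defined for positive definite A).\<close>
definition mpow :: "complex^'n^'n \<Rightarrow> real \<Rightarrow> complex^'n^'n" where
  "mpow A s = (SOME B. \<exists>U lam. unitary U \<and> (\<forall>i. 0 < lam i) \<and>
       A = U ** cdiag lam ** cadj U \<and> B = U ** cdiag (\<lambda>i. lam i powr s) ** cadj U)"

definition cube :: "real^'d \<Rightarrow> real \<Rightarrow> (real^'d) set" where
  "cube a l = {x. \<forall>i. a $ i \<le> x $ i \<and> x $ i < a $ i + l}"

definition is_cube :: "(real^'d) set \<Rightarrow> bool" where
  "is_cube Q \<longleftrightarrow> (\<exists>a l. 0 < l \<and> Q = cube a l)"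

definition dyadic_grid :: "(real^'d) set set \<Rightarrow> bool" where
  "dyadic_grid D \<longleftrightarrow>
     (\<forall>Q\<in>D. \<exists>a (k::int). Q = cube a (2 powr real_of_int k)) \<and>
     (\<forall>k::int. \<Union>{Q\<in>D. \<exists>a. Q = cube a (2 powr real_of_int k)} = UNIV \<and>
        disjoint {Q\<in>D. \<exists>a. Q = cube a (2 powr real_of_int k)}) \<and>
     (\<forall>Q\<in>D. \<forall>R\<in>D. Q \<inter> R = {} \<or> Q \<subseteq> R \<or> R \<subseteq> Q)"

definition matrix_weight :: "(real^'d \<Rightarrow> complex^'n^'n) \<Rightarrow> bool" where
  "matrix_weight W \<longleftrightarrow>
     (\<forall>K i j. compact K \<longrightarrow> set_integrable lebesgue K (\<lambda>x. W x $ i $ j)) \<and>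
     (AE x in lebesgue. posdef (W x))"

definition outer_lebesgue :: "(real^'d) set \<Rightarrow> ennreal" where
  "outer_lebesgue S = (INF T\<in>{T\<in>sets lebesgue. S \<subseteq> T}. emeasure lebesgue T)"

definition max_op ::
  "(real^'d) set set \<Rightarrow> real \<Rightarrow> real \<Rightarrow> (real^'d \<Rightarrow> complex^'n^'n) \<Rightarrow>
   ((real^'d) set \<Rightarrow> complex^'n^'n) \<Rightarrow> (real^'d \<Rightarrow> complex^'n) \<Rightarrow> real^'d \<Rightarrow> ennreal" where
  "max_op D \<alpha> q W V f x =
     (SUP Q\<in>{Q\<in>D. x \<in> Q}.
        ennreal (1 / (measure lebesgue Q) powr (1 - \<alpha> / real CARD('d))) *
        (\<integral>\<^sup>+ y\<in>Q. ennreal (norm (matrix_inv (V Q) *v (mpow (W y) (- 1 / q) *v f y))) \<partial>lebesgue))"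

end

theory Submission
  imports Defs
begin

definition cinner :: "complex^'n \<Rightarrow> complex^'n \<Rightarrow> complex" where
  "cinner x y = (\<Sum>i\<in>UNIV. x$i * cnj (y$i))"

lemma cinner_add_left: "cinner (x + y) z = cinner x z + cinner y z"
  by (simp add: cinner_def distrib_right sum.distrib)
lemma cinner_add_right: "cinner x (y + z) = cinner x y + cinner x z"
  by (simp add: cinner_def distrib_left sum.distrib)
lemma cinner_diff_left: "cinner (x - y) z = cinner x z - cinner y z"
  by (simp add: cinner_def left_diff_distrib sum_subtractf)
lemma cinner_diff_right: "cinner x (y - z) = cinner x y - cinner x z"
  by (simp add: cinner_def right_diff_distrib sum_subtractf)
lemma cinner_smult_left: "cinner (c *s x) y = c * cinner x y"
  by (simp add: cinner_def sum_distrib_left mult.assoc)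
lemma cinner_smult_right: "cinner x (c *s y) = cnj c * cinner x y"
  by (simp add: cinner_def sum_distrib_left algebra_simps)
lemma vec_scaleR_complex: "(scaleR t (x::complex^'n)) $ i = of_real t * x $ i"
  by (subst vector_scaleR_component) (simp add: scaleR_conv_of_real)
lemma cinner_scaleR_left: "cinner (scaleR t x) y = of_real t * cinner x y"
  unfolding cinner_def vec_scaleR_complex by (simp add: sum_distrib_left mult.assoc)
lemma cinner_scaleR_right: "cinner x (scaleR t y) = of_real t * cinner x y"
  unfolding cinner_def vec_scaleR_complex by (simp add: sum_distrib_left algebra_simps)
lemma cinner_zero_left[simp]: "cinner 0 y = 0" by (simp add: cinner_def)
lemma cinner_zero_right[simp]: "cinner x 0 = 0" by (simp add: cinner_def)
lemma cinner_commute: "cinner y x = cnj (cinner x y)"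
  by (simp add: cinner_def mult.commute)

lemma norm_vec_sq: "(norm (x::complex^'n))^2 = (\<Sum>i\<in>UNIV. (norm (x$i))^2)"
  by (simp add: norm_vec_def L2_set_def sum_nonneg)

lemma cinner_self: "cinner x x = of_real ((norm x)^2)"
proof -
  have "cinner x x = (\<Sum>i\<in>UNIV. complex_of_real ((norm (x$i))^2))"
    unfolding cinner_def by (intro sum.cong refl) (metis complex_norm_square)
  also have "\<dots> = of_real ((norm x)^2)" by (simp add: norm_vec_sq)
  finally show ?thesis .
qed

lemma cinner_self_Re: "Re (cinner x x) = (norm x)^2"
  by (simp add: cinner_self)

lemma cadj_cadj[simp]: "cadj (cadj A) = A"
  by (simp add: cadj_def vec_eq_iff)

lemma cadj_mult: "cadj (A ** B) = cadj B ** cadj A"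
  by (simp add: cadj_def vec_eq_iff matrix_matrix_mult_def mult.commute)

lemma cadj_mat1[simp]: "cadj (mat 1) = mat 1"
  by (simp add: cadj_def vec_eq_iff mat_def)

lemma cinner_matrix: "cinner (A *v x) y = cinner x (cadj A *v y)"
proof -
  have "cinner (A *v x) y = (\<Sum>i\<in>UNIV. \<Sum>j\<in>UNIV. A$i$j * x$j * cnj (y$i))"
    by (simp add: cinner_def matrix_vector_mult_def sum_distrib_right)
  also have "\<dots> = (\<Sum>j\<in>UNIV. \<Sum>i\<in>UNIV. A$i$j * x$j * cnj (y$i))"
    by (rule sum.swap)
  also have "\<dots> = cinner x (cadj A *v y)"
    by (simp add: cinner_def matrix_vector_mult_def cadj_def sum_distrib_left algebra_simps)
  finally show ?thesis .
qed

lemma cinner_hermitian: "hermitian A \<Longrightarrow> cinner (A *v x) y = cinner x (A *v y)"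
  by (simp add: cinner_matrix hermitian_def)

lemma component_cinner: "(A *v x) $ j = cinner x (cadj A *v axis j 1)"
  by (simp add: cinner_def matrix_vector_mult_def cadj_def axis_def mult.commute
       if_distrib cong: if_cong)

lemma cinner_cauchy: "norm (cinner x y) \<le> norm x * norm y"
proof -
  define a where "a = (\<chi> i. norm (x$i))"
  define b where "b = (\<chi> i. norm (y$i))"
  have "norm (cinner x y) \<le> (\<Sum>i\<in>UNIV. norm (x$i) * norm (y$i))"
    unfolding cinner_def by (rule order_trans[OF norm_sum]) (simp add: norm_mult)
  also have "\<dots> = inner a b" by (simp add: a_def b_def inner_vec_def)
  also have "\<dots> \<le> norm a * norm b" by (rule norm_cauchy_schwarz)
  also have "norm a = norm x" by (simp add: a_def norm_vec_def)
  also have "norm b = norm y" by (simp add: b_def norm_vec_def)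
  finally show ?thesis .
qed

lemma cmat_scaleR: "(A::complex^'n^'m) *v (t *\<^sub>R x) = t *\<^sub>R (A *v x)"
  by (simp add: vec_eq_iff matrix_vector_mult_def vec_scaleR_complex sum_distrib_left algebra_simps scaleR_sum_right)

lemma cmat_smult: "(A::complex^'n^'m) *v (c *s x) = c *s (A *v x)"
  by (simp add: vec_eq_iff matrix_vector_mult_def sum_distrib_left algebra_simps)

lemma cinner_sum_left: "cinner (\<Sum>i\<in>I. f i) y = (\<Sum>i\<in>I. cinner (f i) y)"
proof (induction I rule: infinite_finite_induct)
  case (insert x F) then show ?case by (simp add: cinner_add_left)
qed auto

lemma orth_complement_exists:
  fixes v :: "'n \<Rightarrow> complex^'n"
  assumes "I \<noteq> UNIV"
    and orth: "\<forall>i\<in>I. \<forall>j\<in>I. cinner (v i) (v j) = (if i = j then 1 else 0)"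
  shows "\<exists>w. w \<noteq> 0 \<and> (\<forall>i\<in>I. cinner w (v i) = 0)"
proof (rule ccontr)
  assume H: "\<not> ?thesis"
  have fin: "finite I" by simp
  have "UNIV \<subseteq> vec.span (v ` I)"
  proof
    fix x :: "complex^'n"
    define r where "r = x - (\<Sum>i\<in>I. cinner x (v i) *s v i)"
    have "\<forall>j\<in>I. cinner r (v j) = 0"
    proof
      fix j assume j: "j \<in> I"
      have "cinner (\<Sum>i\<in>I. cinner x (v i) *s v i) (v j) = (\<Sum>i\<in>I. cinner x (v i) * cinner (v i) (v j))"
        by (simp add: cinner_sum_left cinner_smult_left)
      also have "\<dots> = (\<Sum>i\<in>I. if i = j then cinner x (v j) else 0)"
        using orth j by (intro sum.cong refl) auto
      also have "\<dots> = cinner x (v j)" using j fin by simp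
      finally show "cinner r (v j) = 0" by (simp add: r_def cinner_diff_left)
    qed
    with H have "r = 0" by blast
    hence "x = (\<Sum>i\<in>I. cinner x (v i) *s v i)" by (simp add: r_def)
    also have "\<dots> \<in> vec.span (v ` I)"
      by (intro vec.span_sum vec.span_scale vec.span_base) auto
    finally show "x \<in> vec.span (v ` I)" .
  qed
  hence "vec.dim (UNIV :: (complex^'n) set) \<le> card (v ` I)"
    by (intro vec.dim_le_card) auto
  also have "\<dots> \<le> card I" by (rule card_image_le) simp
  also have "\<dots> < CARD('n)" using assms(1) by (intro psubset_card_mono) auto
  finally have "vec.dim (UNIV :: (complex^'n) set) < CARD('n)" .
  thus False unfolding vec_dim_card by simp
qed

lemma continuous_cinner_quad: "continuous_on S (\<lambda>w. Re (cinner (A *v w) w))"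
  unfolding cinner_def matrix_vector_mult_def
  by (intro continuous_intros)

lemma continuous_cinner_left: "continuous_on S (\<lambda>w. cinner w c)"
  unfolding cinner_def by (intro continuous_intros)

lemma closed_orth: "closed {w::complex^'n. \<forall>i\<in>I. cinner w (v i) = 0}"
proof -
  have "{w::complex^'n. \<forall>i\<in>I. cinner w (v i) = 0} = (\<Inter>i\<in>I. {w. cinner w (v i) = 0})" by auto
  also have "closed \<dots>"
    by (intro closed_INT ballI closed_Collect_eq continuous_on_const continuous_cinner_left)
  finally show ?thesis .
qed

lemma cinner_quad_scale: "cinner (A *v (t *\<^sub>R w)) (t *\<^sub>R w) = of_real (t^2) * cinner (A *v w) w"
  by (simp add: cmat_scaleR cinner_scaleR_left cinner_scaleR_right power2_eq_square)

lemma eigvec_exists: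
  fixes A :: "complex^'n^'n"
  assumes herm: "hermitian A"
    and S_def: "S = {w::complex^'n. \<forall>i\<in>I. cinner w (v i) = 0}"
    and inv: "\<forall>w\<in>S. A *v w \<in> S"
    and ne: "\<exists>w\<in>S. w \<noteq> 0"
  shows "\<exists>w\<in>S. norm w = 1 \<and> (\<exists>\<mu>. A *v w = \<mu> *\<^sub>R w)"
proof -
  have Sadd: "x + y \<in> S" if "x \<in> S" "y \<in> S" for x y using that by (simp add: S_def cinner_add_left)
  have Sdiff: "x - y \<in> S" if "x \<in> S" "y \<in> S" for x y using that by (simp add: S_def cinner_diff_left)
  have Sscale: "t *\<^sub>R x \<in> S" if "x \<in> S" for x t using that by (simp add: S_def cinner_scaleR_left)
  define K where "K = S \<inter> sphere 0 1"
  have "compact K" unfolding K_def S_def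
    by (intro closed_Int_compact closed_orth compact_sphere)
  moreover from ne obtain w where w: "w \<in> S" "w \<noteq> 0" by blast
  hence "(1 / norm w) *\<^sub>R w \<in> K" by (simp add: K_def Sscale)
  hence "K \<noteq> {}" by blast
  ultimately obtain w0 where w0: "w0 \<in> K" and max: "\<forall>y\<in>K. Re (cinner (A *v y) y) \<le> Re (cinner (A *v w0) w0)"
    using continuous_attains_sup[OF _ _ continuous_cinner_quad] by blast
  define \<mu> where "\<mu> = Re (cinner (A *v w0) w0)"
  have w0S: "w0 \<in> S" and nw0: "norm w0 = 1" using w0 by (auto simp: K_def)
  have bound: "Re (cinner (A *v y) y) \<le> \<mu> * (norm y)^2" if "y \<in> S" for y
  proof (cases "y = 0")
    case True then show ?thesis by simp
  next
    case False
    define t where "t = 1 / norm y"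
    have "t *\<^sub>R y \<in> K" using that False by (simp add: K_def Sscale t_def)
    hence "Re (cinner (A *v (t *\<^sub>R y)) (t *\<^sub>R y)) \<le> \<mu>" using max by (simp add: \<mu>_def)
    hence "t^2 * Re (cinner (A *v y) y) \<le> \<mu>" by (simp add: cinner_quad_scale)
    moreover have "t^2 = 1 / (norm y)^2" by (simp add: t_def power_divide)
    ultimately have "Re (cinner (A *v y) y) / (norm y)^2 \<le> \<mu>" by simp
    thus ?thesis using False by (simp add: pos_divide_le_eq)
  qed
  define r where "r = A *v w0 - \<mu> *\<^sub>R w0"
  have rS: "r \<in> S" unfolding r_def using w0S inv by (intro Sdiff Sscale) auto
  define Y where "Y = cinner (A *v w0) r"
  define P where "P = cinner w0 r"
  define Z where "Z = Re (cinner (A *v r) r)"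
  define c where "c = Z - \<mu> * (norm r)^2"
  have YP: "Re Y - \<mu> * Re P = (norm r)^2"
  proof -
    have "cinner r r = Y - of_real \<mu> * P"
      unfolding Y_def P_def by (subst (1) r_def) (simp add: cinner_diff_left cinner_scaleR_left)
    hence "Re (cinner r r) = Re Y - \<mu> * Re P" by simp
    thus ?thesis by (simp add: cinner_self_Re)
  qed
  have key: "2 * t * (norm r)^2 + t^2 * c \<le> 0" if "t > 0" for t
  proof -
    have "w0 + t *\<^sub>R r \<in> S" using w0S rS by (intro Sadd Sscale)
    hence b: "Re (cinner (A *v (w0 + t *\<^sub>R r)) (w0 + t *\<^sub>R r)) \<le> \<mu> * (norm (w0 + t *\<^sub>R r))^2"
      by (rule bound)
    have e1: "cinner (A *v (w0 + t *\<^sub>R r)) (w0 + t *\<^sub>R r)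
        = cinner (A *v w0) w0 + of_real t * Y + of_real t * cinner (A *v r) w0 + of_real (t^2) * cinner (A *v r) r"
      by (simp add: matrix_vector_right_distrib cmat_scaleR cinner_add_left cinner_add_right
          cinner_scaleR_left cinner_scaleR_right Y_def power2_eq_square algebra_simps)
    have "cinner (A *v r) w0 = cnj Y"
      by (simp add: cinner_hermitian[OF herm] Y_def cinner_commute[of w0])
    hence e2: "Re (cinner (A *v (w0 + t *\<^sub>R r)) (w0 + t *\<^sub>R r)) = \<mu> + 2 * t * Re Y + t^2 * Z"
      by (simp add: e1 \<mu>_def Z_def)
    have "(norm (w0 + t *\<^sub>R r))^2 = Re (cinner (w0 + t *\<^sub>R r) (w0 + t *\<^sub>R r))"
      by (simp add: cinner_self_Re)
    also have "cinner (w0 + t *\<^sub>R r) (w0 + t *\<^sub>R r) = cinner w0 w0 + of_real t * P + of_real t * cinner r w0 + of_real (t^2) * cinner r r"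
      by (simp add: cinner_add_left cinner_add_right cinner_scaleR_left cinner_scaleR_right P_def
          power2_eq_square algebra_simps)
    finally have e3: "(norm (w0 + t *\<^sub>R r))^2 = 1 + 2 * t * Re P + t^2 * (norm r)^2"
      by (simp add: cinner_self_Re nw0 cinner_commute[of w0 r] P_def)
    from b e2 e3 have "\<mu> + 2 * t * Re Y + t^2 * Z \<le> \<mu> * (1 + 2 * t * Re P + t^2 * (norm r)^2)" by simp
    with YP show ?thesis by (simp add: c_def algebra_simps)
  qed
  have "norm r = 0"
  proof (rule ccontr)
    assume "norm r \<noteq> 0"
    hence rp: "(norm r)^2 > 0" by simp
    define t where "t = (norm r)^2 / (\<bar>c\<bar> + 1)"
    have tp: "t > 0" using rp by (simp add: t_def)
    have "2 * t * (norm r)^2 + t^2 * c \<le> 0" using key[OF tp] .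
    hence "t * (2 * (norm r)^2 + t * c) \<le> 0" by (simp add: algebra_simps power2_eq_square)
    hence "2 * (norm r)^2 + t * c \<le> 0" using tp by (simp add: mult_le_0_iff)
    moreover have "t * \<bar>c\<bar> < (norm r)^2"
    proof -
      have "t * \<bar>c\<bar> = (norm r)^2 * (\<bar>c\<bar> / (\<bar>c\<bar> + 1))" by (simp add: t_def)
      also have "\<dots> < (norm r)^2 * 1" using rp by (intro mult_strict_left_mono) auto
      finally show ?thesis by simp
    qed
    moreover have "- (t * \<bar>c\<bar>) \<le> t * c"
    proof -
      have "t * (- \<bar>c\<bar>) \<le> t * c" using tp by (intro mult_left_mono) auto
      thus ?thesis by simp
    qed
    ultimately show False using rp by linarith
  qed
  hence "A *v w0 = \<mu> *\<^sub>R w0" by (simp add: r_def)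
  thus ?thesis using w0S nw0 by blast
qed

lemma eigenbasis_aux:
  fixes A :: "complex^'n^'n" and I :: "'n set"
  assumes herm: "hermitian A"
  shows "\<exists>v \<mu>. (\<forall>i\<in>I. \<forall>j\<in>I. cinner (v i) (v j) = (if i = j then 1 else 0)) \<and>
              (\<forall>i\<in>I. A *v v i = \<mu> i *\<^sub>R v i)"
proof (induction I rule: infinite_finite_induct)
  case (infinite I) then show ?case by simp
next
  case empty then show ?case by simp
next
  case (insert j I)
  from insert.IH obtain v \<mu> where orth: "\<forall>i\<in>I. \<forall>k\<in>I. cinner (v i) (v k) = (if i = k then 1 else 0)"
    and eig: "\<forall>i\<in>I. A *v v i = \<mu> i *\<^sub>R v i" by blast
  define S where "S = {w::complex^'n. \<forall>i\<in>I. cinner w (v i) = 0}"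
  have "I \<noteq> UNIV" using insert.hyps by auto
  from orth_complement_exists[OF this orth] have ne: "\<exists>w\<in>S. w \<noteq> 0" by (auto simp: S_def)
  have inv: "\<forall>w\<in>S. A *v w \<in> S"
  proof
    fix w assume "w \<in> S"
    thus "A *v w \<in> S" using eig
      by (simp add: S_def cinner_hermitian[OF herm] cinner_scaleR_right)
  qed
  from eigvec_exists[OF herm S_def inv ne] obtain w \<nu> where
    w: "w \<in> S" "norm w = 1" "A *v w = \<nu> *\<^sub>R w" by blast
  define v' where "v' = v(j := w)"
  define \<mu>' where "\<mu>' = \<mu>(j := \<nu>)"
  have wi: "cinner w (v i) = 0" if "i \<in> I" for i using w(1) that by (simp add: S_def)
  have iw: "cinner (v i) w = 0" if "i \<in> I" for i using wi[OF that] cinner_commute[of w "v i"] by simp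
  have ww: "cinner w w = 1" using w(2) by (simp add: cinner_self)
  have "\<forall>i\<in>insert j I. \<forall>k\<in>insert j I. cinner (v' i) (v' k) = (if i = k then 1 else 0)"
    using orth wi iw ww insert.hyps by (auto simp: v'_def)
  moreover have "\<forall>i\<in>insert j I. A *v v' i = \<mu>' i *\<^sub>R v' i"
    using eig w(3) insert.hyps by (auto simp: v'_def \<mu>'_def)
  ultimately show ?case by blast
qed

lemma cdiag_cadj[simp]: "cadj (cdiag lam) = cdiag lam"
  by (simp add: cadj_def cdiag_def vec_eq_iff)

lemma cdiag_mult: "cdiag a ** cdiag b = cdiag (\<lambda>i. a i * b i)"
proof -
  have "(cdiag a ** cdiag b)$i$j = (\<Sum>k\<in>UNIV. if k = i then (of_real (a i) * (if i = j then of_real (b i) else 0)) else 0)" for i j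
    unfolding matrix_matrix_mult_def cdiag_def vec_lambda_beta by (intro sum.cong refl) auto
  thus ?thesis by (simp add: vec_eq_iff cdiag_def)
qed

lemma cdiag_one: "cdiag (\<lambda>i. 1) = mat 1"
  by (simp add: cdiag_def vec_eq_iff mat_def)

lemma spectral:
  fixes A :: "complex^'n^'n"
  assumes "posdef A"
  shows "\<exists>U lam. unitary U \<and> (\<forall>i. 0 < lam i) \<and> A = U ** cdiag lam ** cadj U"
proof -
  have herm: "hermitian A" using assms by (simp add: posdef_def)
  obtain v :: "'n \<Rightarrow> complex^'n" and \<mu> where orth0: "\<forall>i\<in>UNIV. \<forall>j\<in>UNIV. cinner (v i) (v j) = (if i = j then 1 else 0)"
    and eig0: "\<forall>i\<in>UNIV. A *v v i = \<mu> i *\<^sub>R v i"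
    using eigenbasis_aux[OF herm, of UNIV] by metis
  have orth: "\<forall>i. \<forall>j. cinner (v i) (v j) = (if i = j then 1 else 0)" using orth0 by blast
  have eig: "\<forall>i. A *v v i = \<mu> i *\<^sub>R v i" using eig0 by blast
  define U :: "complex^'n^'n" where "U = (\<chi> r c. v c $ r)"
  have UU: "cadj U ** U = mat 1"
  proof -
    have "(cadj U ** U) $ i $ j = cinner (v j) (v i)" for i j
      by (simp add: U_def cadj_def matrix_matrix_mult_def cinner_def mult.commute)
    thus ?thesis using orth by (simp add: vec_eq_iff mat_def)
  qed
  hence UU': "U ** cadj U = mat 1" by (simp add: matrix_left_right_inverse)
  have AU: "A ** U = U ** cdiag \<mu>"
  proof -
    have "(A ** U) $ r $ c = (A *v v c) $ r" for r c
      by (simp add: U_def matrix_matrix_mult_def matrix_vector_mult_def)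
    moreover have "(U ** cdiag \<mu>) $ r $ c = (\<mu> c *\<^sub>R v c) $ r" for r c
      unfolding vec_scaleR_complex by (simp add: U_def cdiag_def matrix_matrix_mult_def if_distrib mult.commute cong: if_cong)
    ultimately show ?thesis using eig by (simp add: vec_eq_iff)
  qed
  have "A = A ** (U ** cadj U)" by (simp add: UU')
  also have "\<dots> = U ** cdiag \<mu> ** cadj U" by (simp add: matrix_mul_assoc AU)
  finally have dec: "A = U ** cdiag \<mu> ** cadj U" .
  have pos: "0 < \<mu> i" for i
  proof -
    have vi: "v i \<noteq> 0" using orth[rule_format, of i i] by auto
    have "0 < Re (\<Sum>a\<in>UNIV. \<Sum>b\<in>UNIV. cnj (v i $ a) * A $ a $ b * v i $ b)"
      using assms vi by (simp add: posdef_def)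
    also have "(\<Sum>a\<in>UNIV. \<Sum>b\<in>UNIV. cnj (v i $ a) * A $ a $ b * v i $ b) = cinner (A *v v i) (v i)"
      by (simp add: cinner_def matrix_vector_mult_def sum_distrib_right sum_distrib_left algebra_simps)
    also have "\<dots> = of_real (\<mu> i) * cinner (v i) (v i)" using eig by (simp add: cinner_scaleR_left)
    also have "\<dots> = of_real (\<mu> i)" using orth by simp
    finally show ?thesis by simp
  qed
  show ?thesis using UU UU' dec pos unfolding unitary_def by blast
qed

lemma mpow_hermitian:
  assumes "posdef A"
  shows "hermitian (mpow A s)"
proof -
  obtain U lam where ex: "unitary U \<and> (\<forall>i. 0 < lam i) \<and> A = U ** cdiag lam ** cadj U"
    using spectral[OF assms] by blast
  let ?P = "\<lambda>B. \<exists>U lam. unitary U \<and> (\<forall>i. 0 < lam i) \<and>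
       A = U ** cdiag lam ** cadj U \<and> B = U ** cdiag (\<lambda>i. lam i powr s) ** cadj U"
  have "?P (U ** cdiag (\<lambda>i. lam i powr s) ** cadj U)" using ex by blast
  hence "?P (mpow A s)" unfolding mpow_def by (rule someI)
  then obtain U' lam' where B: "mpow A s = U' ** cdiag (\<lambda>i. lam' i powr s) ** cadj U'" by blast
  show ?thesis unfolding hermitian_def B by (simp add: cadj_mult matrix_mul_assoc)
qed

lemma posdef_invertible:
  assumes "posdef (V::complex^'n^'n)"
  shows "matrix_inv V ** V = mat 1"
proof -
  obtain U lam where U: "unitary U" and lam: "\<forall>i. 0 < lam i" and dec: "V = U ** cdiag lam ** cadj U"
    using spectral[OF assms] by blast
  define V' where "V' = U ** cdiag (\<lambda>i. 1 / lam i) ** cadj U"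
  have UU: "cadj U ** U = mat 1" "U ** cadj U = mat 1" using U by (auto simp: unitary_def)
  have e1: "V' ** V = U ** (cdiag (\<lambda>i. 1 / lam i) ** (cadj U ** U) ** cdiag lam) ** cadj U"
    by (simp add: V'_def dec matrix_mul_assoc)
  have l1: "(\<lambda>i. 1 / lam i * lam i) = (\<lambda>i. 1)" using lam by (auto simp: fun_eq_iff) (metis less_irrefl)
  have "cdiag (\<lambda>i. 1 / lam i) ** (cadj U ** U) ** cdiag lam = mat 1"
    by (simp only: UU matrix_mul_rid cdiag_mult l1 cdiag_one)
  hence "V' ** V = mat 1" using e1 UU by simp
  hence "invertible V" using invertible_left_inverse by blast
  thus ?thesis by (metis (mono_tags, lifting) invertible_def matrix_inv_def someI_ex)
qed

definition cubetop :: "real^'d \<Rightarrow> real \<Rightarrow> real^'d" where "cubetop a l = (\<chi> i. a $ i + l)"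

lemma cube_sub: "box a (cubetop a l) \<subseteq> cube a l" "cube a l \<subseteq> cbox a (cubetop a l)"
  by (auto simp: cube_def cubetop_def mem_box_cart less_imp_le)

lemma cube_lmeasurable_measure:
  fixes a :: "real^'d"
  assumes "0 < l"
  shows "cube a l \<in> lmeasurable" "measure lebesgue (cube a l) = l ^ CARD('d)"
proof -
  let ?b = "cubetop a l"
  have neg: "negligible (cbox a ?b - cube a l \<union> (cube a l - cbox a ?b))"
    by (rule negligible_subset[OF negligible_frontier_interval[of a ?b]]) (use cube_sub[of a l] in blast)
  show "cube a l \<in> lmeasurable"
    by (rule lmeasurable_negligible_symdiff[OF lmeasurable_cbox neg])
  have "measure lebesgue (cube a l) = measure lebesgue (cbox a ?b)"
    by (rule measure_negligible_symdiff[OF lmeasurable_cbox neg])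
  also have "\<dots> = Henstock_Kurzweil_Integration.content (cbox a ?b)"
    by simp
  also have "\<dots> = (\<Prod>i\<in>UNIV. ?b $ i - a $ i)"
    using assms by (intro content_cbox_cart) (auto simp: cubetop_def interval_ne_empty_cart)
  also have "\<dots> = l ^ CARD('d)" by (simp add: cubetop_def)
  finally show "measure lebesgue (cube a l) = l ^ CARD('d)" .
qed

lemma cube_interior: fixes a :: "real^'d" assumes "0 < l" shows "interior (cube a l) \<noteq> {}"
proof -
  have "box a (cubetop a l) \<subseteq> interior (cube a l)"
    using cube_sub(1) by (intro interior_maximal) auto
  moreover have "box a (cubetop a l) \<noteq> {}" using assms by (simp add: interval_ne_empty_cart cubetop_def)
  ultimately show ?thesis by blast
qed

lemma cube_mem: fixes a :: "real^'d" assumes "0 < l" shows "a \<in> cube a l"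
  using assms by (simp add: cube_def)

lemma grid_cube:
  assumes "dyadic_grid D" "Q \<in> D"
  obtains a k where "Q = cube a (2 powr real_of_int k)"
  using assms unfolding dyadic_grid_def by blast

lemma grid_facts:
  fixes D :: "(real^'d) set set"
  assumes "dyadic_grid D" "Q \<in> D"
  shows "Q \<in> lmeasurable" "measure lebesgue Q > 0" "Q \<noteq> {}" "interior Q \<noteq> {}"
    "\<exists>k::int. measure lebesgue Q = 2 powr (real_of_int k * real CARD('d))"
proof -
  obtain a k where Q: "Q = cube a (2 powr real_of_int k)" using grid_cube[OF assms] .
  have l: "0 < 2 powr real_of_int k" by simp
  show "Q \<in> lmeasurable" using cube_lmeasurable_measure(1)[OF l] Q by simp
  have m: "measure lebesgue Q = (2 powr real_of_int k) ^ CARD('d)"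
    using cube_lmeasurable_measure(2)[OF l] Q by simp
  thus "measure lebesgue Q > 0" by simp
  show "Q \<noteq> {}" using cube_mem[OF l] Q by blast
  show "interior Q \<noteq> {}" using cube_interior[OF l] Q by blast
  have e: "(2 powr real_of_int k) ^ CARD('d) = 2 powr (real_of_int k * real CARD('d))"
    by (simp add: powr_realpow[symmetric] powr_powr)
  show "\<exists>k::int. measure lebesgue Q = 2 powr (real_of_int k * real CARD('d))" using m e by (intro exI[of _ k]) simp
qed

lemma grid_same_measure:
  fixes D :: "(real^'d) set set"
  assumes D: "dyadic_grid D" and QR: "Q \<in> D" "R \<in> D" and x: "x \<in> Q" "x \<in> R"
    and m: "measure lebesgue Q = measure lebesgue R"
  shows "Q = R"
proof -
  obtain a k where Q: "Q = cube a (2 powr real_of_int k)" using grid_cube[OF D QR(1)] .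
  obtain b j where R: "R = cube b (2 powr real_of_int j)" using grid_cube[OF D QR(2)] .
  have "(2 powr real_of_int k) ^ CARD('d) = (2 powr real_of_int j) ^ CARD('d)"
    using m Q R cube_lmeasurable_measure(2)[of "2 powr real_of_int k" a]
      cube_lmeasurable_measure(2)[of "2 powr real_of_int j" b] by simp
  hence "2 powr real_of_int k = 2 powr real_of_int j"
    by (rule power_eq_imp_eq_base) auto
  hence kj: "k = j" using powr_inj[of 2 "real_of_int k" "real_of_int j"] by simp
  have "disjoint {Q\<in>D. \<exists>a. Q = cube a (2 powr real_of_int k)}"
    using D unfolding dyadic_grid_def by blast
  moreover have "Q \<in> {Q\<in>D. \<exists>a. Q = cube a (2 powr real_of_int k)}" "R \<in> {Q\<in>D. \<exists>a. Q = cube a (2 powr real_of_int k)}"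
    using QR Q R kj by auto
  ultimately show "Q = R" using x unfolding pairwise_def disjnt_def by blast
qed

lemma grid_nested:
  assumes "dyadic_grid D" "Q \<in> D" "R \<in> D"
  shows "Q \<inter> R = {} \<or> Q \<subseteq> R \<or> R \<subseteq> Q"
  using assms unfolding dyadic_grid_def by blast

lemma int_bounded_finite:
  fixes m d B :: real
  assumes "d \<ge> 1" "m > 0"
  shows "finite {k::int. m \<le> 2 powr (real_of_int k * d) \<and> 2 powr (real_of_int k * d) \<le> B}"
proof -
  let ?K = "max 0 \<lceil>log 2 B\<rceil>"
  let ?L = "min 0 \<lfloor>log 2 m\<rfloor>"
  have "{k::int. m \<le> 2 powr (real_of_int k * d) \<and> 2 powr (real_of_int k * d) \<le> B} \<subseteq> {?L..?K}"
  proof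
    fix k assume k: "k \<in> {k::int. m \<le> 2 powr (real_of_int k * d) \<and> 2 powr (real_of_int k * d) \<le> B}"
    have B0: "B > 0" using k assms(2) by auto
    have up: "real_of_int k * d \<le> log 2 B" using k B0 by (simp add: le_log_iff)
    have lo: "log 2 m \<le> real_of_int k * d" using k assms(2) by (simp add: log_le_iff)
    have "k \<le> ?K"
    proof (cases "k \<le> 0")
      case False
      hence "real_of_int k \<le> real_of_int k * d" using assms(1) by (simp add: mult_le_cancel_left1)
      hence "real_of_int k \<le> log 2 B" using up by linarith
      hence "k \<le> \<lceil>log 2 B\<rceil>" by linarith
      thus ?thesis by simp
    qed simp
    moreover have "?L \<le> k"
    proof (cases "k \<ge> 0")
      case False
      hence "real_of_int k * d \<le> real_of_int k" using assms(1) by (simp add: mult_le_cancel_left2)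
      hence "log 2 m \<le> real_of_int k" using lo by linarith
      hence "\<lfloor>log 2 m\<rfloor> \<le> k" by linarith
      thus ?thesis by simp
    qed simp
    ultimately show "k \<in> {?L..?K}" by simp
  qed
  thus ?thesis by (rule finite_subset) simp
qed

lemma maximal_cover:
  fixes D :: "(real^'d) set set"
  assumes D: "dyadic_grid D" and GD: "G \<subseteq> D" and bnd: "\<forall>Q\<in>G. measure lebesgue Q \<le> B"
  shows "\<exists>G'. G' \<subseteq> G \<and> \<Union>G \<subseteq> \<Union>G' \<and> pairwise disjnt G' \<and> countable G'"
proof -
  define G' where "G' = {R\<in>G. \<forall>R'\<in>G. R \<subseteq> R' \<longrightarrow> R' = R}"
  have fm: "R \<in> fmeasurable lebesgue" if "R \<in> G" for R
    using grid_facts(1)[OF D] GD that by (auto simp: fmeasurable_def)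
  have cover: "\<Union>G \<subseteq> \<Union>G'"
  proof
    fix x assume "x \<in> \<Union>G"
    then obtain Q where Q: "Q \<in> G" "x \<in> Q" by blast
    define S where "S = {R\<in>G. Q \<subseteq> R}"
    have QS: "Q \<in> S" using Q by (simp add: S_def)
    have xS: "x \<in> R" if "R \<in> S" for R using that Q by (auto simp: S_def)
    have inj: "inj_on (measure lebesgue) S"
    proof (rule inj_onI)
      fix R1 R2 assume R: "R1 \<in> S" "R2 \<in> S" "measure lebesgue R1 = measure lebesgue R2"
      have "R1 \<in> D" "R2 \<in> D" using R(1,2) GD by (auto simp: S_def)
      from grid_same_measure[OF D this xS[OF R(1)] xS[OF R(2)] R(3)] show "R1 = R2" .
    qed
    have mQ: "measure lebesgue Q > 0" using grid_facts(2)[OF D] GD Q by auto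
    have "measure lebesgue ` S \<subseteq> (\<lambda>k::int. 2 powr (real_of_int k * real CARD('d))) `
         {k::int. measure lebesgue Q \<le> 2 powr (real_of_int k * real CARD('d)) \<and> 2 powr (real_of_int k * real CARD('d)) \<le> B}"
    proof
      fix y assume "y \<in> measure lebesgue ` S"
      then obtain R where R: "R \<in> S" "y = measure lebesgue R" by blast
      from grid_facts(5)[OF D, of R] R GD obtain k::int where k: "measure lebesgue R = 2 powr (real_of_int k * real CARD('d))"
        by (auto simp: S_def)
      have RG: "R \<in> G" "Q \<subseteq> R" using R by (auto simp: S_def)
      have "measure lebesgue Q \<le> measure lebesgue R"
        by (rule measure_mono_fmeasurable[OF RG(2) fmeasurableD[OF fm[OF Q(1)]] fm[OF RG(1)]])
      moreover have "measure lebesgue R \<le> B" using bnd R by (auto simp: S_def)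
      ultimately show "y \<in> (\<lambda>k::int. 2 powr (real_of_int k * real CARD('d))) `
         {k::int. measure lebesgue Q \<le> 2 powr (real_of_int k * real CARD('d)) \<and> 2 powr (real_of_int k * real CARD('d)) \<le> B}"
        using R k by auto
    qed
    moreover have "finite {k::int. measure lebesgue Q \<le> 2 powr (real_of_int k * real CARD('d)) \<and> 2 powr (real_of_int k * real CARD('d)) \<le> B}"
      by (rule int_bounded_finite) (use mQ in auto)
    ultimately have "finite (measure lebesgue ` S)" by (meson finite_imageI finite_subset)
    hence finS: "finite S" using inj finite_image_iff by blast
    have "Max (measure lebesgue ` S) \<in> measure lebesgue ` S" using finS QS by (intro Max_in) auto
    then obtain R where R: "R \<in> S" "measure lebesgue R = Max (measure lebesgue ` S)" by auto
    have "R \<in> G'"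
    proof -
      have "R' = R" if R': "R' \<in> G" "R \<subseteq> R'" for R'
      proof -
        have R'S: "R' \<in> S" using R R' by (auto simp: S_def)
        have "measure lebesgue R' \<le> measure lebesgue R" using R R'S finS by simp
        moreover have "measure lebesgue R \<le> measure lebesgue R'"
          using R(1) by (intro measure_mono_fmeasurable[OF R'(2) fmeasurableD[OF fm] fm[OF R'(1)]]) (auto simp: S_def)
        moreover have "R' \<in> D" "R \<in> D" using R'S R GD by (auto simp: S_def)
        ultimately show "R' = R" using grid_same_measure[OF D _ _ xS[OF R'S] xS[OF R(1)]] by simp
      qed
      thus ?thesis using R by (auto simp: G'_def S_def)
    qed
    thus "x \<in> \<Union>G'" using xS[OF R(1)] by blast
  qed
  have disj: "pairwise disjnt G'"
  proof (rule pairwiseI)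
    fix Q1 Q2 assume Q: "Q1 \<in> G'" "Q2 \<in> G'" "Q1 \<noteq> Q2"
    have "Q1 \<inter> Q2 = {} \<or> Q1 \<subseteq> Q2 \<or> Q2 \<subseteq> Q1" using grid_nested[OF D] GD Q by (auto simp: G'_def)
    thus "disjnt Q1 Q2" using Q by (auto simp: G'_def disjnt_def)
  qed
  have "countable G'"
    by (rule countable_disjoint_nonempty_interior_subsets[OF disj])
       (use grid_facts(4)[OF D] GD in \<open>auto simp: G'_def\<close>)
  moreover have "G' \<subseteq> G" by (auto simp: G'_def)
  ultimately show ?thesis using cover disj by blast
qed

lemma pointwise_bound:
  fixes M Vi :: "complex^'n^'n"
  assumes "hermitian M"
  shows "norm (Vi *v (M *v f)) \<le> (\<Sum>j\<in>UNIV. norm f * norm (M *v (cadj Vi *v axis j 1)))"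
proof -
  have "norm (Vi *v (M *v f)) \<le> (\<Sum>j\<in>UNIV. norm ((Vi *v (M *v f)) $ j))"
    unfolding norm_vec_def by (rule L2_set_le_sum) auto
  also have "\<dots> \<le> (\<Sum>j\<in>UNIV. norm f * norm (M *v (cadj Vi *v axis j 1)))"
  proof (rule sum_mono)
    fix j
    have "(Vi *v (M *v f)) $ j = cinner (M *v f) (cadj Vi *v axis j 1)" by (rule component_cinner)
    also have "\<dots> = cinner f (M *v (cadj Vi *v axis j 1))" by (rule cinner_hermitian[OF assms])
    finally show "norm ((Vi *v (M *v f)) $ j) \<le> norm f * norm (M *v (cadj Vi *v axis j 1))"
      using cinner_cauchy by metis
  qed
  finally show ?thesis .
qed

lemma young_param:
  fixes a b s p p' :: real
  assumes "a \<ge> 0" "b \<ge> 0" "s > 0" "p > 1" "p' > 1" "1/p + 1/p' = 1"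
  shows "a * b \<le> s powr p / p * a powr p + 1 / (p' * s powr p') * b powr p'"
proof -
  have "a * b = (s * a) * (b / s)" using assms by simp
  also have "\<dots> \<le> (s * a) powr p / p + (b / s) powr p' / p'"
    using assms by (intro Youngs_inequality) auto
  also have "(s * a) powr p = s powr p * a powr p" using assms by (simp add: powr_mult)
  also have "(b / s) powr p' = b powr p' / s powr p'" using assms by (simp add: powr_divide)
  finally show ?thesis by (simp add: field_simps)
qed

lemma norm_axis_one: "norm (axis j (1::complex) :: complex^'n) = 1"
proof -
  have "(\<Sum>i\<in>UNIV. (norm ((axis j (1::complex) :: complex^'n) $ i))^2) = (\<Sum>i\<in>(UNIV::'n set). if i = j then 1 else 0)"
    by (intro sum.cong) (auto simp: axis_def)
  thus ?thesis by (simp add: norm_vec_def L2_set_def)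
qed

lemma key_estimate:
  fixes M :: "real^'d \<Rightarrow> complex^'n^'n" and V :: "complex^'n^'n" and f :: "real^'d \<Rightarrow> complex^'n"
  assumes p: "1 < p" and p': "p' = p / (p - 1)"
    and Q: "Q \<in> sets lebesgue" "0 < measure lebesgue Q"
    and herm: "AE y in lebesgue. hermitian (M y)"
    and Vpd: "posdef V"
    and lower: "\<forall>e. (1 / measure lebesgue Q * (LINT y:Q|lebesgue. norm (M y *v e) powr p')) powr (1 / p') \<le> norm (V *v e)"
    and upper: "\<forall>e. norm (V *v e) \<le> sqrt (real CARD('n)) *
                 (1 / measure lebesgue Q * (LINT y:Q|lebesgue. norm (M y *v e) powr p')) powr (1 / p')"
    and fm: "f \<in> borel_measurable lebesgue"
    and gi: "integrable lebesgue (\<lambda>x. norm (f x) powr p)"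
  shows "(\<integral>\<^sup>+ y\<in>Q. ennreal (norm (matrix_inv V *v (M y *v f y))) \<partial>lebesgue)
         \<le> ennreal (real CARD('n) * (measure lebesgue Q) powr (1/p') * (LINT y:Q|lebesgue. norm (f y) powr p) powr (1/p))"
proof -
  define mQ where "mQ = measure lebesgue Q"
  define g where "g = (\<lambda>y. norm (f y) powr p)"
  define FQ where "FQ = (LINT y|lebesgue. indicator Q y * g y)"
  define Vi where "Vi = matrix_inv V"
  define u where "u = (\<lambda>j. cadj Vi *v axis j (1::complex))"
  define k where "k = (\<lambda>j y. indicator Q y * norm (M y *v u j) powr p')"
  define nn where "nn = real CARD('n)"
  have mQ: "0 < mQ" using Q by (simp add: mQ_def)
  have p'1: "p' > 1" using p by (simp add: p')
  have pp': "1/p + 1/p' = 1" using p by (simp add: p' field_simps)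
  have FQ_eq: "(LINT y:Q|lebesgue. norm (f y) powr p) = FQ"
    by (simp add: set_lebesgue_integral_def FQ_def g_def)
  have gQi: "integrable lebesgue (\<lambda>y. indicator Q y * g y)"
    using integrable_mult_indicator[OF Q(1) gi] by (simp add: g_def)
  have FQ0: "0 \<le> FQ" unfolding FQ_def by (rule integral_nonneg_AE) (simp add: g_def)
  have herm_V: "hermitian V" using Vpd by (simp add: posdef_def)
  have ViV: "Vi ** V = mat 1" using posdef_invertible[OF Vpd] by (simp add: Vi_def)
  have Vu: "V *v u j = axis j 1" for j
  proof -
    have "V *v u j = (cadj V ** cadj Vi) *v axis j 1"
      using herm_V by (simp add: u_def hermitian_def matrix_vector_mul_assoc)
    also have "cadj V ** cadj Vi = mat 1" by (simp add: cadj_mult[symmetric] ViV)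
    finally show ?thesis by simp
  qed
  have kint: "integrable lebesgue (k j)" and Ij: "integral\<^sup>L lebesgue (k j) \<le> mQ" for j
  proof -
    let ?I = "LINT y:Q|lebesgue. norm (M y *v u j) powr p'"
    have Ik: "?I = integral\<^sup>L lebesgue (k j)" by (simp add: set_lebesgue_integral_def k_def)
    have up: "1 \<le> sqrt nn * (1 / mQ * ?I) powr (1 / p')"
      using upper[rule_format, of "u j"] by (simp add: Vu norm_axis_one mQ_def nn_def)
    show "integrable lebesgue (k j)"
    proof (rule ccontr)
      assume "\<not> integrable lebesgue (k j)"
      hence "integral\<^sup>L lebesgue (k j) = 0" by (rule not_integrable_integral_eq)
      with up Ik show False by simp
    qed
    have I0: "0 \<le> ?I" unfolding Ik k_def by (rule integral_nonneg_AE) simp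
    have lo: "(1 / mQ * ?I) powr (1 / p') \<le> 1"
      using lower[rule_format, of "u j"] by (simp add: Vu norm_axis_one mQ_def)
    have "1 / mQ * ?I \<le> 1"
    proof (rule ccontr)
      assume "\<not> 1 / mQ * ?I \<le> 1"
      hence "1 < (1 / mQ * ?I) powr (1 / p')" using p'1 by (intro gr_one_powr) auto
      with lo show False by simp
    qed
    hence "?I \<le> mQ" using mQ by (simp add: field_simps)
    thus "integral\<^sup>L lebesgue (k j) \<le> mQ" by (simp add: Ik)
  qed
  have LHS: "(\<integral>\<^sup>+ y\<in>Q. ennreal (norm (Vi *v (M y *v f y))) \<partial>lebesgue) \<le> ennreal (nn * mQ powr (1/p') * FQ powr (1/p))"
  proof (cases "FQ = 0")
    case True
    have "AE y in lebesgue. indicator Q y * g y = 0"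
      using True gQi by (subst integral_nonneg_eq_0_iff_AE[symmetric]) (auto simp: FQ_def g_def)
    hence "AE y in lebesgue. ennreal (norm (Vi *v (M y *v f y))) * indicator Q y \<le> 0"
      by eventually_elim (auto simp: g_def indicator_def split: if_splits)
    from nn_integral_mono_AE[OF this] show ?thesis by simp
  next
    case False
    hence FQp: "FQ > 0" using FQ0 by simp
    define s where "s = (mQ / FQ) powr (1 / (p * p'))"
    have sp: "s > 0" using mQ FQp by (simp add: s_def)
    define c1 where "c1 = s powr p / p"
    define c2 where "c2 = 1 / (p' * s powr p')"
    define \<phi> where "\<phi> = (\<lambda>y. \<Sum>j\<in>UNIV. c1 * (indicator Q y * g y) + c2 * k j y)"
    have \<phi>i: "integrable lebesgue \<phi>" unfolding \<phi>_def using gQi kint by auto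
    have \<phi>I: "integral\<^sup>L lebesgue \<phi> = (\<Sum>j\<in>UNIV. c1 * FQ + c2 * integral\<^sup>L lebesgue (k j))"
      unfolding \<phi>_def using gQi kint by (simp add: FQ_def)
    have c1: "c1 \<ge> 0" "c2 \<ge> 0" using sp p p'1 by (auto simp: c1_def c2_def)
    have "integral\<^sup>L lebesgue \<phi> \<le> (\<Sum>j\<in>(UNIV::'n set). c1 * FQ + c2 * mQ)"
      unfolding \<phi>I using Ij c1 by (intro sum_mono add_left_mono mult_left_mono) auto
    also have "\<dots> = nn * (c1 * FQ + c2 * mQ)" by (simp add: nn_def)
    also have "c1 * FQ + c2 * mQ = mQ powr (1/p') * FQ powr (1/p)"
    proof -
      have e1: "1 / (p * p') * p = 1 / p'" and e2: "1 / (p * p') * p' = 1 / p"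
        using p p'1 by (auto simp: field_simps)
      have e3: "1 - 1 / p' = 1 / p" "1 - 1/p = 1/p'" using pp' by linarith+
      have sp1: "s powr p = mQ powr (1/p') / FQ powr (1/p')"
        using mQ FQp p by (simp add: s_def powr_powr e1 powr_divide)
      have sp2: "s powr p' = mQ powr (1/p) / FQ powr (1/p)"
        using mQ FQp p'1 by (simp add: s_def powr_powr e2 powr_divide)
      have "FQ powr (1/p) = FQ powr (1 - 1/p')" by (simp add: e3)
      also have "\<dots> = FQ powr 1 / FQ powr (1/p')" by (rule powr_diff)
      finally have a1: "FQ / FQ powr (1/p') = FQ powr (1/p)" using FQp by simp
      have "mQ powr (1/p') = mQ powr (1 - 1/p)" by (simp add: e3)
      also have "\<dots> = mQ powr 1 / mQ powr (1/p)" by (rule powr_diff)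
      finally have a2: "mQ / mQ powr (1/p) = mQ powr (1/p')" using mQ by simp
      have "c1 * FQ = mQ powr (1/p') * (FQ / FQ powr (1/p')) / p"
        by (simp add: c1_def sp1 field_simps)
      also have "\<dots> = mQ powr (1/p') * FQ powr (1/p) / p" by (simp add: a1)
      finally have t1: "c1 * FQ = mQ powr (1/p') * FQ powr (1/p) / p" .
      have "c2 * mQ = (mQ / mQ powr (1/p)) * FQ powr (1/p) / p'"
        using mQ FQp by (simp add: c2_def sp2 field_simps)
      also have "\<dots> = mQ powr (1/p') * FQ powr (1/p) / p'" by (simp add: a2)
      finally have t2: "c2 * mQ = mQ powr (1/p') * FQ powr (1/p) / p'" .
      have "c1 * FQ + c2 * mQ = mQ powr (1/p') * FQ powr (1/p) * (1/p + 1/p')"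
        unfolding t1 t2 by (simp add: field_simps)
      thus ?thesis by (simp add: pp')
    qed
    finally have \<phi>le: "integral\<^sup>L lebesgue \<phi> \<le> nn * (mQ powr (1/p') * FQ powr (1/p))" .
    have pw: "AE y in lebesgue. ennreal (norm (Vi *v (M y *v f y))) * indicator Q y \<le> ennreal (\<phi> y)"
      using herm
    proof eventually_elim
      case (elim y)
      show ?case
      proof (cases "y \<in> Q")
        case False then show ?thesis by simp
      next
        case True
        have "norm (Vi *v (M y *v f y)) \<le> (\<Sum>j\<in>UNIV. norm (f y) * norm (M y *v u j))"
          unfolding u_def by (rule pointwise_bound[OF elim])
        also have "\<dots> \<le> \<phi> y"
        proof -
          have yj: "norm (f y) * norm (M y *v u j) \<le> c1 * (indicator Q y * g y) + c2 * k j y" for j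
          proof -
            have "norm (f y) * norm (M y *v u j) \<le> c1 * norm (f y) powr p + c2 * norm (M y *v u j) powr p'"
              using young_param[OF norm_ge_zero norm_ge_zero sp p p'1 pp', of "f y" "M y *v u j"]
              by (simp add: c1_def c2_def)
            thus ?thesis using True by (simp add: k_def g_def)
          qed
          show ?thesis unfolding \<phi>_def by (intro sum_mono yj)
        qed
        finally show ?thesis using True by (simp add: ennreal_leI)
      qed
    qed
    have "(\<integral>\<^sup>+ y\<in>Q. ennreal (norm (Vi *v (M y *v f y))) \<partial>lebesgue) \<le> (\<integral>\<^sup>+ y. ennreal (\<phi> y) \<partial>lebesgue)"
      by (rule nn_integral_mono_AE[OF pw])
    also have "\<dots> = ennreal (integral\<^sup>L lebesgue \<phi>)"
    proof (rule nn_integral_eq_integral[OF \<phi>i])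
      show "AE y in lebesgue. 0 \<le> \<phi> y"
        unfolding \<phi>_def k_def g_def using c1 by (intro AE_I2 sum_nonneg add_nonneg_nonneg mult_nonneg_nonneg) auto
    qed
    also have "\<dots> \<le> ennreal (nn * mQ powr (1/p') * FQ powr (1/p))"
      using \<phi>le by (intro ennreal_leI) (simp add: mult.assoc)
    finally show ?thesis .
  qed
  thus ?thesis by (simp add: mQ_def FQ_eq nn_def Vi_def)
qed

lemma cover_bound:
  fixes D :: "(real^'d) set set" and g :: "real^'d \<Rightarrow> real"
  assumes D: "dyadic_grid D" and gi: "integrable lebesgue g" and g0: "\<And>x. 0 \<le> g x"
    and GD: "G \<subseteq> D" and lam: "0 < lam" and nn: "0 < nn" and qp: "p \<le> q" and p: "0 < p"
    and bd: "\<forall>Q\<in>G. lam < nn * measure lebesgue Q powr (- 1 / q) * (LINT y:Q|lebesgue. g y) powr (1 / p)"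
  shows "\<exists>T\<in>sets lebesgue. \<Union>G \<subseteq> T \<and>
           emeasure lebesgue T \<le> ennreal (nn powr q * lam powr (- q) * ((LINT x|lebesgue. g x) powr (1 / p)) powr q)"
proof -
  define N where "N = (LINT x|lebesgue. g x)"
  define F where "F = (\<lambda>Q. LINT y:Q|lebesgue. g y)"
  have q: "0 < q" using qp p by simp
  have N0: "0 \<le> N" unfolding N_def using g0 by simp
  have Qs: "Q \<in> sets lebesgue" "0 < measure lebesgue Q" if "Q \<in> G" for Q
    using grid_facts(1,2)[OF D] GD that by (auto simp: fmeasurable_def)
  have F0: "0 \<le> F Q" for Q
    unfolding F_def set_lebesgue_integral_def using g0 by (intro integral_nonneg_AE) (simp add: indicator_def)
  have FN: "F Q \<le> N" if "Q \<in> sets lebesgue" for Q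
  proof -
    have "F Q = (LINT y|lebesgue. indicator Q y * g y)" by (simp add: F_def set_lebesgue_integral_def)
    also have "\<dots> \<le> N" unfolding N_def
      using g0 integrable_mult_indicator[OF that gi]
      by (intro integral_mono gi) (auto simp: indicator_def)
    finally show ?thesis .
  qed
  show ?thesis
  proof (cases "N = 0")
    case True
    have "G = {}"
    proof (rule ccontr)
      assume "G \<noteq> {}"
      then obtain Q where Q: "Q \<in> G" by blast
      have FQ0: "F Q = 0" using FN[OF Qs(1)[OF Q]] F0[of Q] True by simp
      have "lam < nn * measure lebesgue Q powr (- 1 / q) * F Q powr (1 / p)" using bd Q by (simp add: F_def)
      with FQ0 lam show False by simp
    qed
    thus ?thesis by (intro bexI[of _ "{}"]) auto
  next
    case False
    hence Np: "0 < N" using N0 by simp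
    define K where "K = (nn / lam) powr q * N powr (q / p - 1)"
    have K0: "0 \<le> K" by (simp add: K_def)
    have est: "measure lebesgue Q \<le> K * F Q \<and> measure lebesgue Q \<le> (nn / lam) powr q * N powr (q / p)"
      if Q: "Q \<in> G" for Q
    proof -
      define m where "m = measure lebesgue Q"
      have m: "0 < m" using Qs[OF Q] by (simp add: m_def)
      have b: "lam < nn * m powr (- 1 / q) * F Q powr (1 / p)" using bd Q by (simp add: m_def F_def)
      have FQp: "0 < F Q"
      proof (rule ccontr)
        assume "\<not> 0 < F Q" hence "F Q = 0" using F0[of Q] by simp
        with b lam p show False by simp
      qed
      have mq: "m powr (- 1 / q) = 1 / m powr (1 / q)"
        by (simp add: powr_minus_divide[symmetric])
      have b': "lam < nn * F Q powr (1 / p) / m powr (1 / q)"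
        using b by (simp add: powr_minus_divide)
      have "lam * m powr (1 / q) < nn * F Q powr (1 / p)"
        using b' m by (simp add: pos_less_divide_eq)
      hence "m powr (1 / q) < nn * F Q powr (1 / p) / lam" using lam by (simp add: field_simps)
      hence "(m powr (1 / q)) powr q < (nn * F Q powr (1 / p) / lam) powr q"
        using q by (intro powr_less_mono2) auto
      also have "(m powr (1 / q)) powr q = m" using m q by (simp add: powr_powr)
      also have "(nn * F Q powr (1 / p) / lam) powr q = (nn / lam) powr q * F Q powr (q / p)"
        using nn lam FQp p q by (simp add: powr_mult powr_divide powr_powr field_simps)
      finally have mlt: "m < (nn / lam) powr q * F Q powr (q / p)" .
      have qp1: "0 \<le> q / p - 1" using qp p by (simp add: field_simps)
      have "F Q powr (q / p) = F Q * F Q powr (q / p - 1)"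
        using FQp by (simp add: powr_diff)
      also have "\<dots> \<le> F Q * N powr (q / p - 1)"
        using FN[OF Qs(1)[OF Q]] FQp qp1 by (intro mult_left_mono powr_mono2) auto
      finally have f1: "F Q powr (q / p) \<le> F Q * N powr (q / p - 1)" .
      have f2: "F Q powr (q / p) \<le> N powr (q / p)"
        using FN[OF Qs(1)[OF Q]] FQp qp p by (intro powr_mono2) auto
      have "m \<le> (nn / lam) powr q * (F Q * N powr (q / p - 1))"
        using mlt f1 by (smt (verit) mult_left_mono powr_ge_zero)
      moreover have "m \<le> (nn / lam) powr q * N powr (q / p)"
        using mlt f2 by (smt (verit) mult_left_mono powr_ge_zero)
      ultimately show ?thesis by (simp add: m_def K_def ac_simps)
    qed
    obtain G' where G': "G' \<subseteq> G" "\<Union>G \<subseteq> \<Union>G'" "pairwise disjnt G'" "countable G'"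
      using maximal_cover[OF D GD, of "(nn / lam) powr q * N powr (q / p)"] est by blast
    have G's: "\<And>Q. Q \<in> G' \<Longrightarrow> Q \<in> sets lebesgue" using G'(1) Qs by blast
    have Us: "\<Union>G' \<in> sets lebesgue" using G'(4) G's by (intro sets.countable_Union) auto
    have dj: "disjoint_family_on id G'" using G'(3) by (auto simp: disjoint_family_on_def pairwise_def disjnt_def)
    define dens where "dens = density lebesgue (\<lambda>x. ennreal (g x))"
    have gm: "(\<lambda>x. ennreal (g x)) \<in> borel_measurable lebesgue" using gi by auto
    have densQ: "emeasure dens A = ennreal (F A)" if "A \<in> sets lebesgue" for A
    proof -
      have "emeasure dens A = (\<integral>\<^sup>+ x. ennreal (g x) * indicator A x \<partial>lebesgue)"
        unfolding dens_def by (rule emeasure_density[OF gm that])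
      also have "\<dots> = ennreal (F A)"
        unfolding F_def using g0 by (intro nn_set_integral_eq_set_integral gi that) auto
      finally show ?thesis .
    qed
    have densU: "emeasure dens (space dens) = ennreal N"
    proof -
      have "emeasure dens (space dens) = (\<integral>\<^sup>+ x. ennreal (g x) * indicator UNIV x \<partial>lebesgue)"
        unfolding dens_def by (simp add: emeasure_density[OF gm])
      also have "\<dots> = ennreal N" unfolding N_def using g0 gi by (simp add: nn_integral_eq_integral)
      finally show ?thesis .
    qed
    have "emeasure lebesgue (\<Union>G') = emeasure lebesgue (\<Union>(id ` G'))" by simp
    also have "\<dots> = (\<integral>\<^sup>+ Q. emeasure lebesgue (id Q) \<partial>count_space G')"
      by (rule emeasure_UN_countable[OF _ G'(4) dj]) (simp add: G's)
    also have "\<dots> \<le> (\<integral>\<^sup>+ Q. ennreal K * emeasure dens Q \<partial>count_space G')"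
    proof (rule nn_integral_mono)
      fix Q assume "Q \<in> space (count_space G')"
      hence Q: "Q \<in> G'" by simp
      have QG: "Q \<in> G" using Q G'(1) by blast
      have "emeasure lebesgue Q = ennreal (measure lebesgue Q)"
        using Qs[OF QG] by (intro emeasure_eq_ennreal_measure) (auto simp: measure_def)
      also have "\<dots> \<le> ennreal (K * F Q)" using est[OF QG] by (intro ennreal_leI) simp
      also have "\<dots> = ennreal K * emeasure dens Q"
        using K0 densQ[OF Qs(1)[OF QG]] F0[of Q] by (simp add: ennreal_mult)
      finally show "emeasure lebesgue (id Q) \<le> ennreal K * emeasure dens Q" by simp
    qed
    also have "\<dots> = ennreal K * (\<integral>\<^sup>+ Q. emeasure dens (id Q) \<partial>count_space G')"
      by (simp add: nn_integral_cmult)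
    also have "(\<integral>\<^sup>+ Q. emeasure dens (id Q) \<partial>count_space G') = emeasure dens (\<Union>(id ` G'))"
      by (rule emeasure_UN_countable[symmetric, OF _ G'(4) dj]) (simp add: dens_def G's)
    also have "\<dots> \<le> emeasure dens (space dens)"
      by (rule emeasure_mono) (auto simp: dens_def)
    also have "\<dots> = ennreal N" by (rule densU)
    also have "ennreal K * ennreal N = ennreal (K * N)" using K0 N0 by (simp add: ennreal_mult)
    also have "K * N = nn powr q * lam powr (- q) * (N powr (1 / p)) powr q"
    proof -
      have "N powr (q / p - 1) * N = N powr (q / p)" using Np by (simp add: powr_diff)
      moreover have "(N powr (1 / p)) powr q = N powr (q / p)" by (simp add: powr_powr)
      moreover have "(nn / lam) powr q = nn powr q * lam powr (- q)"
        using nn lam by (simp add: powr_divide powr_minus_divide)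
      ultimately show ?thesis by (simp add: K_def mult.assoc)
    qed
    finally have "emeasure lebesgue (\<Union>G') \<le> ennreal (nn powr q * lam powr (- q) * (N powr (1 / p)) powr q)"
      using mult_left_mono[of _ _ "ennreal K"] by (meson zero_le)
    thus ?thesis using Us G'(2) by (auto simp: N_def)
  qed
qed

theorem mainTheorem10:
  fixes \<alpha> p q p' :: real
  assumes "0 \<le> \<alpha>" "\<alpha> < real CARD('d)"
    and "1 < p" "\<alpha> * p < real CARD('d)"
    and "1 / q = 1 / p - \<alpha> / real CARD('d)"
    and "p' = p / (p - 1)"
  shows "\<exists>C>0. \<forall>(W :: real^'d \<Rightarrow> complex^'n^'n) (V :: (real^'d) set \<Rightarrow> complex^'n^'n)
            (D :: (real^'d) set set) (f :: real^'d \<Rightarrow> complex^'n) (lam::real).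
     matrix_weight W \<longrightarrow>
     (\<forall>K. compact K \<longrightarrow>
        set_integrable lebesgue K (\<lambda>x. onorm (\<lambda>v. mpow (W x) (- 1 / q) *v v) powr p')) \<longrightarrow>
     dyadic_grid D \<longrightarrow>
     (\<forall>Q\<in>D. posdef (V Q) \<and>
        (\<forall>e::complex^'n.
           (1 / measure lebesgue Q * (LINT y:Q|lebesgue. norm (mpow (W y) (- 1 / q) *v e) powr p'))
              powr (1 / p') \<le> norm (V Q *v e) \<and>
           norm (V Q *v e) \<le> sqrt (real CARD('n)) *
             (1 / measure lebesgue Q * (LINT y:Q|lebesgue. norm (mpow (W y) (- 1 / q) *v e) powr p'))
              powr (1 / p'))) \<longrightarrow>
     f \<in> borel_measurable lebesgue \<longrightarrow>
     integrable lebesgue (\<lambda>x. norm (f x) powr p) \<longrightarrow>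
     0 < lam \<longrightarrow>
     outer_lebesgue {x. max_op D \<alpha> q W V f x > ennreal lam}
       \<le> ennreal (C * lam powr (- q) * ((LINT x|lebesgue. norm (f x) powr p) powr (1 / p)) powr q)"
proof -
  define nn where "nn = real CARD('n)"
  define dd where "dd = real CARD('d)"
  have nn0: "0 < nn" by (simp add: nn_def)
  have dd0: "0 < dd" by (simp add: dd_def)
  have p0: "0 < p" using assms(3) by simp
  have p'1: "p' > 1" using assms(3) by (simp add: assms(6))
  have pp': "1/p + 1/p' = 1" using assms(3) by (simp add: assms(6) field_simps)
  have ad: "\<alpha> / dd < 1 / p" using assms(4) dd0 p0 by (simp add: dd_def field_simps)
  have iq: "1 / q = 1 / p - \<alpha> / dd" using assms(5) by (simp add: dd_def)
  have q0: "0 < q"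
  proof -
    have "0 < 1 / q" using iq ad by simp
    thus ?thesis by (simp add: zero_less_divide_1_iff)
  qed
  have qp: "p \<le> q"
  proof -
    have "0 \<le> \<alpha> / dd" using assms(1) dd0 by simp
    hence "1 / q \<le> 1 / p" using iq by simp
    thus ?thesis using q0 p0 by (simp add: field_simps)
  qed
  have expo: "1 / p' - (1 - \<alpha> / dd) = - 1 / q" using iq pp' by (simp add: field_simps)
  show ?thesis
  proof (intro exI[of _ "nn powr q"] conjI allI impI)
    show "0 < nn powr q" using nn0 by simp
    fix W :: "real^'d \<Rightarrow> complex^'n^'n" and V :: "(real^'d) set \<Rightarrow> complex^'n^'n"
      and D :: "(real^'d) set set" and f :: "real^'d \<Rightarrow> complex^'n" and lam :: real
    assume W: "matrix_weight W"
      and loc: "\<forall>K. compact K \<longrightarrow>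
        set_integrable lebesgue K (\<lambda>x. onorm (\<lambda>v. mpow (W x) (- 1 / q) *v v) powr p')"
      and D: "dyadic_grid D"
      and HV: "\<forall>Q\<in>D. posdef (V Q) \<and>
        (\<forall>e::complex^'n.
           (1 / measure lebesgue Q * (LINT y:Q|lebesgue. norm (mpow (W y) (- 1 / q) *v e) powr p'))
              powr (1 / p') \<le> norm (V Q *v e) \<and>
           norm (V Q *v e) \<le> sqrt (real CARD('n)) *
             (1 / measure lebesgue Q * (LINT y:Q|lebesgue. norm (mpow (W y) (- 1 / q) *v e) powr p'))
              powr (1 / p'))"
      and fm: "f \<in> borel_measurable lebesgue"
      and gi: "integrable lebesgue (\<lambda>x. norm (f x) powr p)"
      and lam: "0 < lam"
    have herm: "AE y in lebesgue. hermitian (mpow (W y) (- 1 / q))"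
    proof -
      from W have "AE x in lebesgue. posdef (W x)" by (simp add: matrix_weight_def)
      thus ?thesis by eventually_elim (rule mpow_hermitian)
    qed
    define Bd where "Bd = (\<lambda>Q. nn * measure lebesgue Q powr (- 1 / q) * (LINT y:Q|lebesgue. norm (f y) powr p) powr (1 / p))"
    have termb: "ennreal (1 / (measure lebesgue Q) powr (1 - \<alpha> / real CARD('d))) *
        (\<integral>\<^sup>+ y\<in>Q. ennreal (norm (matrix_inv (V Q) *v (mpow (W y) (- 1 / q) *v f y))) \<partial>lebesgue)
        \<le> ennreal (Bd Q)" if Q: "Q \<in> D" for Q
    proof -
      have Qs: "Q \<in> sets lebesgue" "0 < measure lebesgue Q"
        using grid_facts(1,2)[OF D Q] by (auto simp: fmeasurable_def)
      define mQ where "mQ = measure lebesgue Q"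
      define FQ where "FQ = (LINT y:Q|lebesgue. norm (f y) powr p)"
      have FQ0: "0 \<le> FQ" unfolding FQ_def set_lebesgue_integral_def
        by (intro integral_nonneg_AE) (simp add: indicator_def)
      have KE: "(\<integral>\<^sup>+ y\<in>Q. ennreal (norm (matrix_inv (V Q) *v (mpow (W y) (- 1 / q) *v f y))) \<partial>lebesgue)
         \<le> ennreal (nn * mQ powr (1/p') * FQ powr (1/p))"
        unfolding nn_def mQ_def FQ_def
        by (rule key_estimate[where M = "\<lambda>y. mpow (W y) (- 1 / q)", OF assms(3) assms(6) Qs herm _ _ _ fm gi])
           (use HV Q in auto)
      have "ennreal (1 / mQ powr (1 - \<alpha> / dd)) *
        (\<integral>\<^sup>+ y\<in>Q. ennreal (norm (matrix_inv (V Q) *v (mpow (W y) (- 1 / q) *v f y))) \<partial>lebesgue)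
        \<le> ennreal (1 / mQ powr (1 - \<alpha> / dd)) * ennreal (nn * mQ powr (1/p') * FQ powr (1/p))"
        using KE by (rule mult_left_mono) simp
      also have "\<dots> = ennreal (1 / mQ powr (1 - \<alpha> / dd) * (nn * mQ powr (1/p') * FQ powr (1/p)))"
        by (rule ennreal_mult[symmetric]) (use nn0 in auto)
      also have "1 / mQ powr (1 - \<alpha> / dd) * (nn * mQ powr (1/p') * FQ powr (1/p)) = Bd Q"
      proof -
        have h: "mQ powr (1/p') / mQ powr (1 - \<alpha> / dd) = mQ powr (- 1 / q)"
          by (simp add: powr_diff[symmetric] expo)
        have "1 / mQ powr (1 - \<alpha> / dd) * (nn * mQ powr (1/p') * FQ powr (1/p))
            = nn * (mQ powr (1/p') / mQ powr (1 - \<alpha> / dd)) * FQ powr (1/p)" by simp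
        also have "\<dots> = Bd Q" unfolding h by (simp add: Bd_def mQ_def FQ_def)
        finally show ?thesis .
      qed
      finally show ?thesis by (simp add: mQ_def dd_def)
    qed
    define G where "G = {Q\<in>D. lam < Bd Q}"
    have EG: "{x. max_op D \<alpha> q W V f x > ennreal lam} \<subseteq> \<Union>G"
    proof
      fix x assume "x \<in> {x. max_op D \<alpha> q W V f x > ennreal lam}"
      hence "ennreal lam < max_op D \<alpha> q W V f x" by simp
      then obtain Q where Q: "Q \<in> D" "x \<in> Q" and lt: "ennreal lam <
          ennreal (1 / (measure lebesgue Q) powr (1 - \<alpha> / real CARD('d))) *
          (\<integral>\<^sup>+ y\<in>Q. ennreal (norm (matrix_inv (V Q) *v (mpow (W y) (- 1 / q) *v f y))) \<partial>lebesgue)"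
        unfolding max_op_def less_SUP_iff by blast
      have "ennreal lam < ennreal (Bd Q)" using lt termb[OF Q(1)] by (rule less_le_trans)
      hence "lam < Bd Q" using lam by (simp add: ennreal_less_iff)
      thus "x \<in> \<Union>G" using Q by (auto simp: G_def)
    qed
    have "\<exists>T\<in>sets lebesgue. \<Union>G \<subseteq> T \<and>
           emeasure lebesgue T \<le> ennreal (nn powr q * lam powr (- q) * ((LINT x|lebesgue. norm (f x) powr p) powr (1 / p)) powr q)"
      by (rule cover_bound[OF D gi _ _ lam nn0 qp p0]) (auto simp: G_def Bd_def)
    then obtain T where T: "T \<in> sets lebesgue" "\<Union>G \<subseteq> T"
      and Tle: "emeasure lebesgue T \<le> ennreal (nn powr q * lam powr (- q) * ((LINT x|lebesgue. norm (f x) powr p) powr (1 / p)) powr q)"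
      by blast
    have "outer_lebesgue {x. max_op D \<alpha> q W V f x > ennreal lam} \<le> emeasure lebesgue T"
      unfolding outer_lebesgue_def using T EG by (intro INF_lower) auto
    also note Tle
    finally show "outer_lebesgue {x. max_op D \<alpha> q W V f x > ennreal lam}
       \<le> ennreal (nn powr q * lam powr (- q) * ((LINT x|lebesgue. norm (f x) powr p) powr (1 / p)) powr q)" .
  qed
qed

end
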